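(* $r^{(1)}=\frac nN$. Moreover, an $(N,n)$ dual pair $(F,G)$ for $\mathcal H$ belongs to $\mathcal R^{(1)}$ if and only if it is $1$-uniform, i.e. $\langle f_i,g_i\rangle=\frac nN$ for all $i$.
   Context: $\mathcal H$ is a complex Hilbert space of finite dimension $n$, inner product linear in the first argument, $N\ge n$. A finite sequence $F=\{f_i\}_{i=1}^N$ is a frame if there are $0<A\le B$ with $A\|f\|^2\le\sum_i|\langle f,f_i\rangle|^2\le B\|f\|^2$ for all $f$. $G=\{g_i\}_{i=1}^N$ is a dual of $F$ if $f=\sum_i\langle f,g_i\rangle f_i$ for all $f$; $(F,G)$ is then an $(N,n)$ dual pair. A dual pair is $1$-uniform if $\langle f_i,g_i\rangle$ is independent of $i$. $E_{\Lambda,F,G}f=\sum_{i\in\Lambda}\langle f,f_i\rangle g_i$ for $\Lambda\subseteq\{1,\dots,N\}$; $\rho$ is spectral radius; $r^{(1)}_{F,G}=\max_{1\le i\le N}\rho(E_{\{i\},F,G})$; $r^{(1)}=\inf\{r^{(1)}_{F,G}:(F,G)\text{ an }(N,n)\text{ dual pair for }\mathcal H\}$; $\mathcal R^{(1)}=\{(F,G):r^{(1)}_{F,G}=r^{(1)}\}$. *)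

theory Defs
  imports "Jordan_Normal_Form.Spectral_Radius"
begin

text \<open>The n-dimensional complex Hilbert space is modelled as carrier_vec n (complex n-vectors)
  with inner product x \<bullet>c y = sum of x_j * cnj (y_j), linear in the first argument.
  Finite sequences are functions nat to vectors indexed by 1..N.\<close>

definition hnorm_sq :: "nat \<Rightarrow> complex vec \<Rightarrow> real" where
  "hnorm_sq n f = (\<Sum>j<n. (cmod (f $ j))^2)"

definition is_frame :: "nat \<Rightarrow> nat \<Rightarrow> (nat \<Rightarrow> complex vec) \<Rightarrow> bool" where
  "is_frame n N F \<longleftrightarrow> (\<forall>i\<in>{1..N}. F i \<in> carrier_vec n) \<and>
     (\<exists>A B. 0 < A \<and> A \<le> B \<and> (\<forall>f\<in>carrier_vec n.
        A * hnorm_sq n f \<le> (\<Sum>i\<in>{1..N}. (cmod (f \<bullet>c F i))^2) \<and>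
        (\<Sum>i\<in>{1..N}. (cmod (f \<bullet>c F i))^2) \<le> B * hnorm_sq n f))"

definition is_dual :: "nat \<Rightarrow> nat \<Rightarrow> (nat \<Rightarrow> complex vec) \<Rightarrow> (nat \<Rightarrow> complex vec) \<Rightarrow> bool" where
  "is_dual n N F G \<longleftrightarrow> (\<forall>i\<in>{1..N}. G i \<in> carrier_vec n) \<and>
     (\<forall>f\<in>carrier_vec n. \<forall>j<n. f $ j = (\<Sum>i\<in>{1..N}. (f \<bullet>c G i) * (F i $ j)))"

definition dual_pair :: "nat \<Rightarrow> nat \<Rightarrow> (nat \<Rightarrow> complex vec) \<Rightarrow> (nat \<Rightarrow> complex vec) \<Rightarrow> bool" where
  "dual_pair n N F G \<longleftrightarrow> is_frame n N F \<and> is_frame n N G \<and> is_dual n N F G"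

text \<open>Matrix of the operator E_{Lambda,F,G} f = sum_{i in Lambda} <f,f_i> g_i.\<close>
definition E_op :: "nat \<Rightarrow> nat set \<Rightarrow> (nat \<Rightarrow> complex vec) \<Rightarrow> (nat \<Rightarrow> complex vec) \<Rightarrow> complex mat" where
  "E_op n \<Lambda> F G = mat n n (\<lambda>(r, c). \<Sum>i\<in>\<Lambda>. G i $ r * cnj (F i $ c))"

definition r1 :: "nat \<Rightarrow> nat \<Rightarrow> (nat \<Rightarrow> complex vec) \<Rightarrow> (nat \<Rightarrow> complex vec) \<Rightarrow> real" where
  "r1 n N F G = Max ((\<lambda>i. spectral_radius (E_op n {i} F G)) ` {1..N})"

definition r1_opt :: "nat \<Rightarrow> nat \<Rightarrow> real" where
  "r1_opt n N = Inf {r1 n N F G | F G. dual_pair n N F G}"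

definition R1 :: "nat \<Rightarrow> nat \<Rightarrow> ((nat \<Rightarrow> complex vec) \<times> (nat \<Rightarrow> complex vec)) set" where
  "R1 n N = {(F, G). dual_pair n N F G \<and> r1 n N F G = r1_opt n N}"

definition uniform1 :: "nat \<Rightarrow> (nat \<Rightarrow> complex vec) \<Rightarrow> (nat \<Rightarrow> complex vec) \<Rightarrow> bool" where
  "uniform1 N F G \<longleftrightarrow> (\<forall>i\<in>{1..N}. \<forall>j\<in>{1..N}. F i \<bullet>c G i = F j \<bullet>c G j)"

end

theory Submission
  imports Defs
begin


lemma cprod_eq: "w \<in> carrier_vec n \<Longrightarrow> v \<bullet>c w = (\<Sum>j<n. v$j * cnj (w$j))"
  by (auto simp: scalar_prod_def atLeast0LessThan)

lemma rank1_sr: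
  fixes f g :: "complex vec"
  assumes f: "f \<in> carrier_vec n" and g: "g \<in> carrier_vec n" and n: "0 < n"
  shows "spectral_radius (mat n n (\<lambda>(r,c). g$r * cnj (f$c))) = cmod (g \<bullet>c f)"
proof -
  define A where "A = mat n n (\<lambda>(r,c). g$r * cnj (f$c))"
  define t where "t = g \<bullet>c f"
  have A: "A \<in> carrier_mat n n" unfolding A_def by simp
  have Av: "A *\<^sub>v v = (v \<bullet>c f) \<cdot>\<^sub>v g" if v: "v \<in> carrier_vec n" for v
  proof (rule eq_vecI)
    show "dim_vec (A *\<^sub>v v) = dim_vec ((v \<bullet>c f) \<cdot>\<^sub>v g)" using g unfolding A_def by simp
    fix r assume "r < dim_vec ((v \<bullet>c f) \<cdot>\<^sub>v g)"
    hence r: "r < n" using g by simp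
    have "(A *\<^sub>v v) $ r = (\<Sum>c<n. g$r * cnj (f$c) * v$c)"
      using r v unfolding A_def by (auto simp: scalar_prod_def atLeast0LessThan row_def)
    also have "\<dots> = (\<Sum>c<n. v$c * cnj (f$c)) * g$r"
      by (simp add: sum_distrib_left sum_distrib_right mult_ac)
    also have "\<dots> = ((v \<bullet>c f) \<cdot>\<^sub>v g) $ r" using r g f by (simp add: cprod_eq)
    finally show "(A *\<^sub>v v) $ r = ((v \<bullet>c f) \<cdot>\<^sub>v g) $ r" .
  qed
  have spec: "spectrum A \<subseteq> {0, t}"
  proof
    fix k assume "k \<in> spectrum A"
    then obtain v where v: "v \<in> carrier_vec n" "v \<noteq> 0\<^sub>v n" "A *\<^sub>v v = k \<cdot>\<^sub>v v"
      unfolding spectrum_def eigenvalue_def eigenvector_def using A by auto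
    show "k \<in> {0, t}"
    proof (rule ccontr)
      assume k: "k \<notin> {0, t}"
      have e: "(v \<bullet>c f) \<cdot>\<^sub>v g = k \<cdot>\<^sub>v v" using v Av by simp
      have vv: "v = (v \<bullet>c f / k) \<cdot>\<^sub>v g"
      proof (rule eq_vecI)
        fix r assume "r < dim_vec ((v \<bullet>c f / k) \<cdot>\<^sub>v g)"
        hence r: "r < n" using g by simp
        have "(v \<bullet>c f) * g $ r = k * v $ r" using arg_cong[OF e, of "\<lambda>x. x $ r"] r g v by simp
        thus "v $ r = ((v \<bullet>c f / k) \<cdot>\<^sub>v g) $ r" using r g k by (simp add: field_simps)
      qed (use v g in simp)
      define s where "s = v \<bullet>c f"
      have "s = (s / k) * t"
      proof -
        have "s = ((s / k) \<cdot>\<^sub>v g) \<bullet>c f" using vv unfolding s_def by metis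
        also have "\<dots> = (s/k) * t" unfolding t_def using f g
          by (simp add: cprod_eq sum_distrib_left mult_ac)
        finally show ?thesis .
      qed
      moreover have "s \<noteq> 0"
      proof
        assume "s = 0"
        hence "v = 0\<^sub>v n" using vv g by (auto simp: s_def)
        thus False using v by simp
      qed
      ultimately have "k = t" using k by (simp add: field_simps)
      thus False using k by simp
    qed
  qed
  have tin: "t \<in> spectrum A" if "t \<noteq> 0"
  proof -
    have "g \<noteq> 0\<^sub>v n" using that g f unfolding t_def by (auto simp: cprod_eq)
    moreover have "A *\<^sub>v g = t \<cdot>\<^sub>v g" using Av[OF g] unfolding t_def .
    ultimately show ?thesis unfolding spectrum_def eigenvalue_def eigenvector_def
      using A g by auto
  qed
  have m1: "spectral_radius A \<in> norm ` spectrum A" using spectral_radius_mem_max(1)[OF A n] .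
  hence "spectral_radius A \<in> {0, cmod t}" using spec by auto
  moreover have "t \<noteq> 0 \<Longrightarrow> cmod t \<le> spectral_radius A"
    using spectral_radius_mem_max(2)[OF A n] tin by auto
  ultimately have "spectral_radius A = cmod t" by (cases "t = 0") auto
  thus ?thesis unfolding A_def t_def .
qed




lemma sr_E:
  assumes "F i \<in> carrier_vec n" "G i \<in> carrier_vec n" "0 < n"
  shows "spectral_radius (E_op n {i} F G) = cmod (F i \<bullet>c G i)"
proof -
  have "spectral_radius (E_op n {i} F G) = cmod (G i \<bullet>c F i)"
    unfolding E_op_def using rank1_sr[OF assms(1,2,3)] by simp
  also have "G i \<bullet>c F i = cnj (F i \<bullet>c G i)" using assms
    by (simp add: cprod_eq mult.commute)
  finally show ?thesis by simp
qed

lemma trace_sum: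
  assumes "dual_pair n N F G"
  shows "(\<Sum>i\<in>{1..N}. F i \<bullet>c G i) = of_nat n"
proof -
  have Gc: "\<And>i. i \<in> {1..N} \<Longrightarrow> G i \<in> carrier_vec n"
   and d: "\<And>f j. f \<in> carrier_vec n \<Longrightarrow> j < n \<Longrightarrow> f $ j = (\<Sum>i\<in>{1..N}. (f \<bullet>c G i) * (F i $ j))"
    using assms unfolding dual_pair_def is_dual_def by auto
  have k: "1 = (\<Sum>i\<in>{1..N}. F i $ k * cnj (G i $ k))" if k: "k < n" for k
  proof -
    have "1 = unit_vec n k $ k" using k by simp
    also have "\<dots> = (\<Sum>i\<in>{1..N}. (unit_vec n k \<bullet>c G i) * (F i $ k))"
      using d[of "unit_vec n k" k] k by simp
    also have "\<dots> = (\<Sum>i\<in>{1..N}. F i $ k * cnj (G i $ k))"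
    proof (rule sum.cong)
      fix x assume x: "x \<in> {1..N}"
      have "dim_vec (G x) = n" using Gc[OF x] by simp
      thus "(unit_vec n k \<bullet>c G x) * (F x $ k) = F x $ k * cnj (G x $ k)"
        using k Gc[OF x] by (simp add: mult.commute)
    qed simp
    finally show ?thesis .
  qed
  have "(\<Sum>i\<in>{1..N}. F i \<bullet>c G i) = (\<Sum>i\<in>{1..N}. \<Sum>k<n. F i $ k * cnj (G i $ k))"
    by (rule sum.cong) (auto simp: Gc cprod_eq)
  also have "\<dots> = (\<Sum>k<n. \<Sum>i\<in>{1..N}. F i $ k * cnj (G i $ k))" by (rule sum.swap)
  also have "\<dots> = (\<Sum>k<n. 1)" using k by simp
  finally show ?thesis by simp
qed

lemma r1_eq:
  assumes "dual_pair n N F G" "0 < n" "1 \<le> N"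
  shows "r1 n N F G = Max ((\<lambda>i. cmod (F i \<bullet>c G i)) ` {1..N})"
proof -
  have "\<And>i. i \<in> {1..N} \<Longrightarrow> F i \<in> carrier_vec n \<and> G i \<in> carrier_vec n"
    using assms unfolding dual_pair_def is_dual_def is_frame_def by auto
  thus ?thesis unfolding r1_def using sr_E assms(2) by (intro arg_cong[where f=Max] image_cong) auto
qed




definition om :: "nat \<Rightarrow> complex" where "om N = cis (2 * pi / real N)"

lemma om_pow: "om N ^ m = cis (2 * pi * real m / real N)"
  unfolding om_def DeMoivre by (simp add: field_simps)

lemma sum_shift_pow: "(\<Sum>i\<in>{1..M}. (z::complex)^i) = z * (\<Sum>i<M. z^i)"
  by (induct M) (auto simp: field_simps)

lemma om_sum0:
  assumes d: "0 < d" "d < N"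
  shows "(\<Sum>i\<in>{1..N}. (om N ^ d)^i) = 0"
proof -
  define z where "z = om N ^ d"
  have N: "real N > 0" using d by simp
  have zN: "z ^ N = 1"
  proof -
    have "z ^ N = om N ^ (d * N)" by (simp add: z_def power_mult)
    also have "\<dots> = cis (2 * pi * real d)" unfolding om_pow
      using N by (simp add: field_simps)
    also have "\<dots> = 1" using cis_multiple_2pi[of "real d"] by simp
    finally show ?thesis .
  qed
  have z1: "z \<noteq> 1"
  proof
    assume "z = 1"
    hence "cos (2 * pi * real d / real N) = 1" unfolding z_def om_pow
      by (metis cis.sel(1) one_complex.sel(1))
    then obtain m :: int where m: "2 * pi * real d / real N = real_of_int m * 2 * pi"
      unfolding cos_one_2pi_int by blast
    have "real d / real N = (2 * pi * real d / real N) / (2 * pi)" by simp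
    also have "\<dots> = m" unfolding m by simp
    finally have "real d / real N = m" .
    moreover have "0 < real d / real N" "real d / real N < 1" using d N by auto
    ultimately show False by (metis of_int_0_less_iff of_int_less_1_iff not_less zero_less_iff_neq_zero int_one_le_iff_zero_less less_le_not_le)
  qed
  show ?thesis unfolding z_def[symmetric] sum_shift_pow geometric_sum[OF z1] zN by simp
qed

lemma om_orth:
  assumes "j < N" "k < N"
  shows "(\<Sum>i\<in>{1..N}. om N ^ (i*j) * cnj (om N ^ (i*k))) = (if j = k then of_nat N else 0)"
proof -
  have t: "om N ^ (i*j) * cnj (om N ^ (i*k)) = cis (2 * pi * (real i * real j - real i * real k) / real N)" for i
    unfolding om_pow cis_cnj cis_mult by (simp add: diff_divide_distrib[symmetric] right_diff_distrib)
  show ?thesis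
  proof (cases "j = k")
    case True
    thus ?thesis unfolding t by simp
  next
    case False
    show ?thesis
    proof (cases "k < j")
      case True
      have "(\<Sum>i\<in>{1..N}. om N ^ (i*j) * cnj (om N ^ (i*k))) = (\<Sum>i\<in>{1..N}. (om N ^ (j-k))^i)"
      proof (rule sum.cong)
        fix i
        have "(om N ^ (j-k))^i = om N ^ ((j-k)*i)" by (simp add: power_mult)
        also have "\<dots> = cis (2 * pi * (real i * real j - real i * real k) / real N)"
          unfolding om_pow using True by (simp add: of_nat_diff algebra_simps)
        finally show "om N ^ (i*j) * cnj (om N ^ (i*k)) = (om N ^ (j-k))^i" unfolding t by simp
      qed simp
      thus ?thesis using om_sum0[of "j-k" N] True assms by simp
    next
      case kj: False
      hence jk: "j < k" using False by simp
      have "(\<Sum>i\<in>{1..N}. om N ^ (i*j) * cnj (om N ^ (i*k))) = cnj (\<Sum>i\<in>{1..N}. (om N ^ (k-j))^i)"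
        unfolding cnj_sum
      proof (rule sum.cong)
        fix i
        have "cnj ((om N ^ (k-j))^i) = cnj (om N ^ ((k-j)*i))" by (simp add: power_mult)
        also have "\<dots> = cis (2 * pi * (real i * real j - real i * real k) / real N)"
          unfolding om_pow cis_cnj using jk by (intro arg_cong[where f=cis]) (simp add: of_nat_diff minus_divide_left algebra_simps)
        finally show "om N ^ (i*j) * cnj (om N ^ (i*k)) = cnj ((om N ^ (k-j))^i)" unfolding t by simp
      qed simp
      also have "\<dots> = 0" using om_sum0[of "k-j" N] jk assms by simp
      finally show ?thesis using jk by simp
    qed
  qed
qed




lemma om_unit: "om N ^ m * cnj (om N ^ m) = 1"
proof -
  have "complex_of_real ((cmod (om N ^ m))^2) = 1" unfolding om_pow by simp
  thus ?thesis unfolding complex_norm_square .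
qed

definition HF :: "nat \<Rightarrow> nat \<Rightarrow> nat \<Rightarrow> complex vec" where
  "HF n N i = vec n (\<lambda>j. om N ^ (i*j))"
definition HG :: "nat \<Rightarrow> nat \<Rightarrow> nat \<Rightarrow> complex vec" where
  "HG n N i = vec n (\<lambda>j. om N ^ (i*j) / of_nat N)"

lemma HF_c[simp]: "HF n N i \<in> carrier_vec n" and HG_c[simp]: "HG n N i \<in> carrier_vec n"
  unfolding HF_def HG_def by auto

lemma HG_prod: "f \<bullet>c HG n N i = (f \<bullet>c HF n N i) / of_nat N"
  unfolding cprod_eq[OF HF_c] cprod_eq[OF HG_c] by (simp add: HF_def HG_def sum_divide_distrib)

lemma HF_frame_eq:
  assumes f: "f \<in> carrier_vec n" and nN: "n \<le> N"
  shows "(\<Sum>i\<in>{1..N}. (cmod (f \<bullet>c HF n N i))^2) = real N * hnorm_sq n f"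
proof -
  have "complex_of_real (\<Sum>i\<in>{1..N}. (cmod (f \<bullet>c HF n N i))^2)
      = (\<Sum>i\<in>{1..N}. (f \<bullet>c HF n N i) * cnj (f \<bullet>c HF n N i))"
    by (simp only: of_real_sum complex_norm_square)
  also have "\<dots> = (\<Sum>i\<in>{1..N}. \<Sum>j<n. \<Sum>k<n. f$j * cnj (f$k) * (om N ^ (i*k) * cnj (om N ^ (i*j))))"
    unfolding cprod_eq[OF HF_c]
    unfolding cnj_sum sum_product by (simp add: HF_def mult_ac)
  also have "\<dots> = (\<Sum>j<n. \<Sum>i\<in>{1..N}. \<Sum>k<n. f$j * cnj (f$k) * (om N ^ (i*k) * cnj (om N ^ (i*j))))"
    by (rule sum.swap)
  also have "\<dots> = (\<Sum>j<n. \<Sum>k<n. \<Sum>i\<in>{1..N}. f$j * cnj (f$k) * (om N ^ (i*k) * cnj (om N ^ (i*j))))"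
    by (rule sum.cong[OF refl], rule sum.swap)
  also have "\<dots> = (\<Sum>j<n. \<Sum>k<n. f$j * cnj (f$k) * (\<Sum>i\<in>{1..N}. om N ^ (i*k) * cnj (om N ^ (i*j))))"
    by (simp only: sum_distrib_left)
  also have "\<dots> = (\<Sum>j<n. \<Sum>k<n. f$j * cnj (f$k) * (if k = j then of_nat N else 0))"
    using nN by (intro sum.cong refl) (subst om_orth, auto)
  also have "\<dots> = (\<Sum>j<n. of_nat N * (f$j * cnj (f$j)))"
    by (simp add: if_distrib sum.delta mult_ac cong: if_cong)
  also have "\<dots> = complex_of_real (real N * hnorm_sq n f)"
    unfolding hnorm_sq_def of_real_mult of_real_sum sum_distrib_left complex_norm_square by simp
  finally show ?thesis using of_real_eq_iff by blast
qed

lemma HG_frame_eq: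
  assumes f: "f \<in> carrier_vec n" and nN: "n \<le> N" "0 < N"
  shows "(\<Sum>i\<in>{1..N}. (cmod (f \<bullet>c HG n N i))^2) = hnorm_sq n f / real N"
proof -
  have "(\<Sum>i\<in>{1..N}. (cmod (f \<bullet>c HG n N i))^2) = (\<Sum>i\<in>{1..N}. (cmod (f \<bullet>c HF n N i))^2) / (real N)^2"
    by (simp add: HG_prod norm_divide power_divide sum_divide_distrib)
  also have "\<dots> = hnorm_sq n f / real N" using HF_frame_eq[OF f nN(1)] nN(2)
    by (simp add: power2_eq_square)
  finally show ?thesis .
qed

lemma exists_uniform:
  assumes n: "1 \<le> n" and nN: "n \<le> N"
  shows "dual_pair n N (HF n N) (HG n N) \<and>
    (\<forall>i\<in>{1..N}. HF n N i \<bullet>c HG n N i = complex_of_real (real n / real N))"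
proof -
  have N: "0 < N" using n nN by simp
  have hn: "0 \<le> hnorm_sq n f" for f unfolding hnorm_sq_def by (simp add: sum_nonneg)
  have fr1: "is_frame n N (HF n N)" unfolding is_frame_def
    using HF_frame_eq[OF _ nN] N by (intro conjI ballI exI[of _ "real N"]) auto
  have fr2: "is_frame n N (HG n N)" unfolding is_frame_def
    using HG_frame_eq[OF _ nN N] N
    by (intro conjI ballI exI[of _ "1 / real N"]) auto
  have du: "is_dual n N (HF n N) (HG n N)" unfolding is_dual_def
  proof (intro conjI ballI allI impI)
    fix f :: "complex vec" and j assume f: "f \<in> carrier_vec n" and j: "j < n"
    have "(\<Sum>i\<in>{1..N}. (f \<bullet>c HG n N i) * (HF n N i $ j))
       = (\<Sum>i\<in>{1..N}. \<Sum>k<n. f$k / of_nat N * (om N ^ (i*j) * cnj (om N ^ (i*k))))"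
      using j unfolding HG_prod cprod_eq[OF HF_c] by (simp add: HF_def sum_divide_distrib sum_distrib_left sum_distrib_right mult_ac)
    also have "\<dots> = (\<Sum>k<n. f$k / of_nat N * (\<Sum>i\<in>{1..N}. om N ^ (i*j) * cnj (om N ^ (i*k))))"
      unfolding sum_distrib_left by (rule sum.swap)
    also have "\<dots> = (\<Sum>k<n. f$k / of_nat N * (if j = k then of_nat N else 0))"
      using nN j by (intro sum.cong refl) (subst om_orth, auto)
    also have "\<dots> = f $ j" using j N by (simp add: if_distrib sum.delta cong: if_cong)
    finally show "f $ j = (\<Sum>i\<in>{1..N}. (f \<bullet>c HG n N i) * (HF n N i $ j))" ..
  qed simp
  have un: "HF n N i \<bullet>c HG n N i = complex_of_real (real n / real N)" for i
  proof -
    have "HF n N i \<bullet>c HG n N i = (\<Sum>j<n. om N ^ (i*j) * cnj (om N ^ (i*j)) / of_nat N)"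
      unfolding cprod_eq[OF HG_c] by (simp add: HF_def HG_def)
    also have "\<dots> = (\<Sum>j<n. 1 / of_nat N)" by (simp only: om_unit)
    finally show ?thesis by simp
  qed
  show ?thesis using fr1 fr2 du un unfolding dual_pair_def by auto
qed



lemma re_eq_cmod: assumes "Re z = cmod z" shows "z = complex_of_real (Re z)"
proof -
  have "(cmod z)^2 = (Re z)^2 + (Im z)^2" by (rule cmod_power2)
  hence "Im z = 0" using assms by simp
  thus ?thesis by (simp add: complex_eq_iff)
qed

lemma carrier_of_dp:
  assumes "dual_pair n N F G" "i \<in> {1..N}"
  shows "F i \<in> carrier_vec n" "G i \<in> carrier_vec n"
  using assms unfolding dual_pair_def is_dual_def is_frame_def by auto

lemma LB:
  assumes dp: "dual_pair n N F G" and n: "1 \<le> n" and nN: "n \<le> N"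
  shows "real n / real N \<le> r1 n N F G"
proof -
  have N: "1 \<le> N" using n nN by simp
  let ?M = "Max ((\<lambda>i. cmod (F i \<bullet>c G i)) ` {1..N})"
  have le: "cmod (F i \<bullet>c G i) \<le> ?M" if "i \<in> {1..N}" for i using that by (intro Max_ge) auto
  have "real n = cmod (\<Sum>i\<in>{1..N}. F i \<bullet>c G i)" using trace_sum[OF dp] by simp
  also have "\<dots> \<le> (\<Sum>i\<in>{1..N}. cmod (F i \<bullet>c G i))" by (rule norm_sum)
  also have "\<dots> \<le> (\<Sum>i\<in>{1..N}. ?M)" by (rule sum_mono) (rule le)
  also have "\<dots> = real N * ?M" by simp
  finally have "real n \<le> real N * ?M" .
  hence "real n / real N \<le> ?M" using N by (simp add: field_simps)
  thus ?thesis using r1_eq[OF dp _ N] n by simp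
qed



lemma char:
  assumes dp: "dual_pair n N F G" and n: "1 \<le> n" and nN: "n \<le> N"
  shows "r1 n N F G = real n / real N \<longleftrightarrow> (\<forall>i\<in>{1..N}. F i \<bullet>c G i = complex_of_real (real n / real N))"
proof -
  have N: "1 \<le> N" using n nN by simp
  have r: "r1 n N F G = Max ((\<lambda>i. cmod (F i \<bullet>c G i)) ` {1..N})" using r1_eq[OF dp _ N] n by simp
  define c where "c = real n / real N"
  have c0: "0 \<le> c" unfolding c_def by simp
  show ?thesis unfolding c_def[symmetric]
  proof
    assume h: "\<forall>i\<in>{1..N}. F i \<bullet>c G i = complex_of_real c"
    have "(\<lambda>i. cmod (F i \<bullet>c G i)) ` {1..N} = (\<lambda>i. c) ` {1..N}" using h c0 by (intro image_cong) auto
    also have "\<dots> = {c}" using N by auto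
    finally have "(\<lambda>i. cmod (F i \<bullet>c G i)) ` {1..N} = {c}" .
    thus "r1 n N F G = c" using r by simp
  next
    assume h: "r1 n N F G = c"
    have le: "cmod (F i \<bullet>c G i) \<le> c" if "i \<in> {1..N}" for i
      using that unfolding h[symmetric] r by (intro Max_ge) auto
    show "\<forall>i\<in>{1..N}. F i \<bullet>c G i = complex_of_real c"
    proof (rule ccontr)
      assume "\<not> ?thesis"
      then obtain k where k: "k \<in> {1..N}" "F k \<bullet>c G k \<noteq> complex_of_real c" by auto
      have rl: "Re (F i \<bullet>c G i) \<le> c" if "i \<in> {1..N}" for i
        using le[OF that] complex_Re_le_cmod[of "F i \<bullet>c G i"] by linarith
      have "Re (F k \<bullet>c G k) < c"
      proof (rule ccontr)
        assume "\<not> Re (F k \<bullet>c G k) < c"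
        hence e: "Re (F k \<bullet>c G k) = c" using rl[OF k(1)] by simp
        hence "Re (F k \<bullet>c G k) = cmod (F k \<bullet>c G k)"
          using le[OF k(1)] complex_Re_le_cmod[of "F k \<bullet>c G k"] by linarith
        hence "F k \<bullet>c G k = complex_of_real c" using re_eq_cmod e by metis
        thus False using k by simp
      qed
      hence "(\<Sum>i\<in>{1..N}. Re (F i \<bullet>c G i)) < (\<Sum>i\<in>{1..N}. c)"
        using rl k by (intro sum_strict_mono_ex1) auto
      also have "\<dots> = real n" using N unfolding c_def by simp
      finally have lt: "(\<Sum>i\<in>{1..N}. Re (F i \<bullet>c G i)) < real n" .
      have "(\<Sum>i\<in>{1..N}. Re (F i \<bullet>c G i)) = real n"
        using arg_cong[OF trace_sum[OF dp], of Re] by (simp add: Re_sum)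
      thus False using lt by simp
    qed
  qed
qed



lemma uni:
  assumes dp: "dual_pair n N F G" and n: "1 \<le> n" and nN: "n \<le> N"
  shows "uniform1 N F G \<longleftrightarrow> (\<forall>i\<in>{1..N}. F i \<bullet>c G i = complex_of_real (real n / real N))"
proof
  assume u: "uniform1 N F G"
  have N: "1 \<le> N" using n nN by simp
  define t where "t = F 1 \<bullet>c G 1"
  have N1: "1 \<in> {1..N}" using N by simp
  have e: "F i \<bullet>c G i = t" if "i \<in> {1..N}" for i using u that N1 unfolding uniform1_def t_def by blast
  have "of_nat n = (\<Sum>i\<in>{1..N}. F i \<bullet>c G i)" using trace_sum[OF dp] by simp
  also have "\<dots> = (\<Sum>i\<in>{1..N}. t)" using e by (rule sum.cong[OF refl])
  also have "\<dots> = of_nat N * t" by simp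
  finally have "of_nat n = of_nat N * t" .
  hence "t = of_nat n / of_nat N" using N by (simp add: field_simps)
  hence "t = complex_of_real (real n / real N)" by simp
  thus "\<forall>i\<in>{1..N}. F i \<bullet>c G i = complex_of_real (real n / real N)" using e by simp
next
  assume "\<forall>i\<in>{1..N}. F i \<bullet>c G i = complex_of_real (real n / real N)"
  thus "uniform1 N F G" unfolding uniform1_def by simp
qed

theorem theorem4p2:
  fixes n N :: nat
  assumes "1 \<le> n" and "n \<le> N"
  shows "r1_opt n N = real n / real N \<and>
    (\<forall>F G. dual_pair n N F G \<longrightarrow>
       (((F, G) \<in> R1 n N \<longleftrightarrow> uniform1 N F G) \<and>
        (uniform1 N F G \<longleftrightarrow> (\<forall>i\<in>{1..N}. F i \<bullet>c G i = complex_of_real (real n / real N)))))"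
proof -
  have ex: "dual_pair n N (HF n N) (HG n N)" "r1 n N (HF n N) (HG n N) = real n / real N"
  proof -
    show "dual_pair n N (HF n N) (HG n N)" using exists_uniform[OF assms] by (rule conjunct1)
    thus "r1 n N (HF n N) (HG n N) = real n / real N"
      using char[OF _ assms] exists_uniform[OF assms] by blast
  qed
  have opt: "r1_opt n N = real n / real N"
    unfolding r1_opt_def
  proof (rule cInf_eq_minimum)
    show "real n / real N \<in> {r1 n N F G |F G. dual_pair n N F G}" using ex by (intro CollectI exI[of _ "HF n N"] exI[of _ "HG n N"] conjI) simp_all
    fix y assume "y \<in> {r1 n N F G |F G. dual_pair n N F G}"
    then obtain F G where "y = r1 n N F G" "dual_pair n N F G" by blast
    thus "real n / real N \<le> y" using LB[OF _ assms] by simp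
  qed
  show ?thesis
  proof (intro conjI allI impI)
    show "r1_opt n N = real n / real N" by (rule opt)
    fix F G assume dp: "dual_pair n N F G"
    show "uniform1 N F G \<longleftrightarrow> (\<forall>i\<in>{1..N}. F i \<bullet>c G i = complex_of_real (real n / real N))"
      by (rule uni[OF dp assms])
    show "(F, G) \<in> R1 n N \<longleftrightarrow> uniform1 N F G"
      unfolding R1_def using dp opt char[OF dp assms] uni[OF dp assms] by simp
  qed
qed


end
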